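(* Let $a=(a^1,\ldots,a^M)\in\mathcal{C}^M$, $b=(b^1,\ldots,b^M)\in\mathcal{S}^M$ be type sequences whose FCFS matching $A$ is perfect. Form the exchanged sequences $\tilde{b}^m=b^n$, $\tilde{a}^n=a^m$ for $(m,n)\in A$, and then reverse time, obtaining the block $\overleftarrow{a}=(\tilde{a}^M,\ldots,\tilde{a}^1)$ (customers) and $\overleftarrow{b}=(\tilde{b}^M,\ldots,\tilde{b}^1)$ (servers). Then the FCFS matching of $\overleftarrow{a},\overleftarrow{b}$ is perfect, and for the i.i.d. sequences and any $m\in\mathbb{Z}$, $$P\big((c^{m+1},\ldots,c^{m+M})=\overleftarrow{a},(s^{m+1},\ldots,s^{m+M})=\overleftarrow{b}\mid\text{perfect}\big)=P\big((c^{m+1},\ldots,c^{m+M})=a,(s^{m+1},\ldots,s^{m+M})=b\mid\text{perfect}\big),$$ where "perfect" is the event that the FCFS matching of the two blocks of length $M$ is perfect.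
   Context: Let $\mathcal{C}$ and $\mathcal{S}$ be finite sets of customer and server types and $G=(\mathcal{C},\mathcal{S},\mathcal{E})$ a connected bipartite compatibility graph. $(c^m)_{m\in\mathbb{Z}}$ i.i.d. with law $\alpha$ and $(s^n)_{n\in\mathbb{Z}}$ i.i.d. with law $\beta$, independent, all probabilities positive. The FCFS matching of finite sequences is the unique complete matching (compatible index pairs, each index at most once, no unmatched compatible pair left) such that for every matched $(m,n)$ every compatible earlier server $s^l$, $l<n$, is matched to some customer $c^k$ with $k<m$ and every compatible earlier customer $c^k$, $k<m$, is matched to some $s^l$ with $l<n$; it is perfect if all items are matched. *)

theory Defs
  imports "HOL-Probability.Probability"
begin

definition bip_edge :: "('c \<Rightarrow> 's \<Rightarrow> bool) \<Rightarrow> ('c + 's) \<Rightarrow> ('c + 's) \<Rightarrow> bool" where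
  "bip_edge E u v = (case (u, v) of (Inl x, Inr y) \<Rightarrow> E x y | (Inr y, Inl x) \<Rightarrow> E x y | _ \<Rightarrow> False)"

definition bip_connected :: "('c \<Rightarrow> 's \<Rightarrow> bool) \<Rightarrow> bool" where
  "bip_connected E = (\<forall>u v. (bip_edge E)\<^sup>*\<^sup>* u v)"

text \<open>Matchings of a customer list a with a server list b (0-based indices):
 a set of index pairs (m,n), m indexing customers, n indexing servers.\<close>

definition is_matching :: "('c \<Rightarrow> 's \<Rightarrow> bool) \<Rightarrow> 'c list \<Rightarrow> 's list \<Rightarrow> (nat \<times> nat) set \<Rightarrow> bool" where
  "is_matching E a b A =
     ((\<forall>(m,n)\<in>A. m < length a \<and> n < length b \<and> E (a!m) (b!n)) \<and>
      (\<forall>m n n'. (m,n)\<in>A \<longrightarrow> (m,n')\<in>A \<longrightarrow> n = n') \<and>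
      (\<forall>m m' n. (m,n)\<in>A \<longrightarrow> (m',n)\<in>A \<longrightarrow> m = m'))"

definition is_complete_matching :: "('c \<Rightarrow> 's \<Rightarrow> bool) \<Rightarrow> 'c list \<Rightarrow> 's list \<Rightarrow> (nat \<times> nat) set \<Rightarrow> bool" where
  "is_complete_matching E a b A =
     (is_matching E a b A \<and>
      (\<forall>m n. m < length a \<longrightarrow> n < length b \<longrightarrow> E (a!m) (b!n) \<longrightarrow>
             (\<exists>n'. (m,n')\<in>A) \<or> (\<exists>m'. (m',n)\<in>A)))"

definition is_fcfs_matching :: "('c \<Rightarrow> 's \<Rightarrow> bool) \<Rightarrow> 'c list \<Rightarrow> 's list \<Rightarrow> (nat \<times> nat) set \<Rightarrow> bool" where
  "is_fcfs_matching E a b A =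
     (is_complete_matching E a b A \<and>
      (\<forall>(m,n)\<in>A.
         (\<forall>l<n. E (a!m) (b!l) \<longrightarrow> (\<exists>k<m. (k,l)\<in>A)) \<and>
         (\<forall>k<m. E (a!k) (b!n) \<longrightarrow> (\<exists>l<n. (k,l)\<in>A))))"

definition fcfs_matching :: "('c \<Rightarrow> 's \<Rightarrow> bool) \<Rightarrow> 'c list \<Rightarrow> 's list \<Rightarrow> (nat \<times> nat) set" where
  "fcfs_matching E a b = (THE A. is_fcfs_matching E a b A)"

definition perfect_matching :: "'c list \<Rightarrow> 's list \<Rightarrow> (nat \<times> nat) set \<Rightarrow> bool" where
  "perfect_matching a b A =
     ((\<forall>m<length a. \<exists>n. (m,n)\<in>A) \<and> (\<forall>n<length b. \<exists>m. (m,n)\<in>A))"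

definition fcfs_perfect :: "('c \<Rightarrow> 's \<Rightarrow> bool) \<Rightarrow> 'c list \<Rightarrow> 's list \<Rightarrow> bool" where
  "fcfs_perfect E a b = perfect_matching a b (fcfs_matching E a b)"

text \<open>Exchanged sequences: btil!m = b!n and atil!n = a!m for (m,n) in A.\<close>
definition exch_a :: "'c list \<Rightarrow> (nat \<times> nat) set \<Rightarrow> nat \<Rightarrow> 'c list" where
  "exch_a a A M = map (\<lambda>n. a ! (THE m. (m,n)\<in>A)) [0..<M]"

definition exch_b :: "'s list \<Rightarrow> (nat \<times> nat) set \<Rightarrow> nat \<Rightarrow> 's list" where
  "exch_b b A M = map (\<lambda>m. b ! (THE n. (m,n)\<in>A)) [0..<M]"

definition block_eq :: "(int \<Rightarrow> 'w \<Rightarrow> 'c) \<Rightarrow> (int \<Rightarrow> 'w \<Rightarrow> 's) \<Rightarrow> int \<Rightarrow> nat \<Rightarrow> 'c list \<Rightarrow> 's list \<Rightarrow> 'w \<Rightarrow> bool" where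
  "block_eq c s m M x y \<omega> =
     (map (\<lambda>i. c (m + 1 + int i) \<omega>) [0..<M] = x \<and> map (\<lambda>i. s (m + 1 + int i) \<omega>) [0..<M] = y)"

definition block_perfect :: "('c \<Rightarrow> 's \<Rightarrow> bool) \<Rightarrow> (int \<Rightarrow> 'w \<Rightarrow> 'c) \<Rightarrow> (int \<Rightarrow> 'w \<Rightarrow> 's) \<Rightarrow> int \<Rightarrow> nat \<Rightarrow> 'w \<Rightarrow> bool" where
  "block_perfect E c s m M \<omega> =
     fcfs_perfect E (map (\<lambda>i. c (m + 1 + int i) \<omega>) [0..<M]) (map (\<lambda>i. s (m + 1 + int i) \<omega>) [0..<M])"

end

theory Submission
  imports Defs
begin


definition fc_cond :: "('c \<Rightarrow> 's \<Rightarrow> bool) \<Rightarrow> 'c list \<Rightarrow> 's list \<Rightarrow> (nat \<times> nat) set \<Rightarrow> nat \<Rightarrow> nat \<Rightarrow> bool" where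
  "fc_cond E a b A m n = (m < length a \<and> n < length b \<and> E (a!m) (b!n) \<and> (\<forall>l<n. (m,l)\<notin>A) \<and> (\<forall>k<m. (k,n)\<notin>A))"

definition char_prop where
  "char_prop E a b A = (\<forall>m n. (m,n)\<in>A \<longleftrightarrow> fc_cond E a b A m n)"

lemma fcfs_imp_char:
  assumes "is_fcfs_matching E a b A" shows "char_prop E a b A"
  unfolding char_prop_def
proof (intro allI iffI)
  fix m n
  have M: "is_matching E a b A" and C: "\<forall>m n. m < length a \<longrightarrow> n < length b \<longrightarrow> E (a!m) (b!n) \<longrightarrow>
             (\<exists>n'. (m,n')\<in>A) \<or> (\<exists>m'. (m',n)\<in>A)"
    and F: "\<forall>(m,n)\<in>A. (\<forall>l<n. E (a!m) (b!l) \<longrightarrow> (\<exists>k<m. (k,l)\<in>A)) \<and>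
         (\<forall>k<m. E (a!k) (b!n) \<longrightarrow> (\<exists>l<n. (k,l)\<in>A))"
    using assms unfolding is_fcfs_matching_def is_complete_matching_def by auto
  {
    assume h: "(m,n)\<in>A"
    have u1: "\<And>m n n'. (m,n)\<in>A \<Longrightarrow> (m,n')\<in>A \<Longrightarrow> n = n'"
      and u2: "\<And>m m' n. (m,n)\<in>A \<Longrightarrow> (m',n)\<in>A \<Longrightarrow> m = m'"
      and b: "\<And>m n. (m,n)\<in>A \<Longrightarrow> m < length a \<and> n < length b \<and> E (a!m) (b!n)"
      using M unfolding is_matching_def by auto
    have "\<forall>l<n. (m,l)\<notin>A" by (auto dest: u1[OF h])
    moreover have "\<forall>k<m. (k,n)\<notin>A" by (auto dest: u2[OF h])
    ultimately show "fc_cond E a b A m n" unfolding fc_cond_def using b[OF h] by blast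
  }
  {
    assume h: "fc_cond E a b A m n"
    hence hm: "m < length a" "n < length b" "E (a!m) (b!n)" and nl: "\<forall>l<n. (m,l)\<notin>A" and nk: "\<forall>k<m. (k,n)\<notin>A"
      unfolding fc_cond_def by auto
    from C hm have "(\<exists>n'. (m,n')\<in>A) \<or> (\<exists>m'. (m',n)\<in>A)" by auto
    thus "(m,n)\<in>A"
    proof
      assume "\<exists>n'. (m,n')\<in>A"
      then obtain n' where n': "(m,n')\<in>A" by auto
      show ?thesis
      proof (cases "n' = n")
        case False
        with nl n' have "n < n'" by (meson linorder_neqE_nat)
        moreover from F n' have "\<forall>k<m. E (a!k) (b!n') \<longrightarrow> (\<exists>l<n'. (k,l)\<in>A)"
          "\<forall>l<n'. E (a!m) (b!l) \<longrightarrow> (\<exists>k<m. (k,l)\<in>A)" by auto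
        ultimately obtain k where "k<m" "(k,n)\<in>A" using hm by blast
        with nk show ?thesis by auto
      qed (use n' in auto)
    next
      assume "\<exists>m'. (m',n)\<in>A"
      then obtain m' where m': "(m',n)\<in>A" by auto
      show ?thesis
      proof (cases "m' = m")
        case False
        with nk m' have "m < m'" by (meson linorder_neqE_nat)
        moreover from F m' have "\<forall>k<m'. E (a!k) (b!n) \<longrightarrow> (\<exists>l<n. (k,l)\<in>A)" by auto
        ultimately obtain l where "l<n" "(m,l)\<in>A" using hm by blast
        with nl show ?thesis by auto
      qed (use m' in auto)
    qed
  }
qed

lemma char_imp_fcfs:
  assumes "char_prop E a b A" shows "is_fcfs_matching E a b A"
proof -
  have A1: "fc_cond E a b A m n" if "(m,n)\<in>A" for m n
    using iffD1[OF assms[unfolded char_prop_def, rule_format] that] .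
  have A2: "(m,n)\<in>A" if "fc_cond E a b A m n" for m n
    using iffD2[OF assms[unfolded char_prop_def, rule_format] that] .
  have M: "is_matching E a b A" unfolding is_matching_def
  proof (intro conjI allI impI ballI)
    fix p assume p: "p \<in> A" then show "case p of (m,n) \<Rightarrow> m < length a \<and> n < length b \<and> E (a!m) (b!n)"
    proof (cases p)
      case (Pair m n)
      with p have "fc_cond E a b A m n" using A1 by blast
      thus ?thesis using Pair unfolding fc_cond_def by simp
    qed
  next
    fix m n n' assume h: "(m,n)\<in>A" "(m,n')\<in>A"
    have c: "fc_cond E a b A m n" "fc_cond E a b A m n'" using A1[OF h(1)] A1[OF h(2)] by auto
    show "n = n'"
    proof (rule ccontr)
      assume "n \<noteq> n'"
      then consider "n < n'" | "n' < n" by linarith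
      then show False
      proof cases
        case 1
        from c(2) have "\<forall>l<n'. (m,l)\<notin>A" unfolding fc_cond_def by blast
        with 1 h(1) show False by blast
      next
        case 2
        from c(1) have "\<forall>l<n. (m,l)\<notin>A" unfolding fc_cond_def by blast
        with 2 h(2) show False by blast
      qed
    qed
  next
    fix m m' n assume h: "(m,n)\<in>A" "(m',n)\<in>A"
    have c: "fc_cond E a b A m n" "fc_cond E a b A m' n" using A1[OF h(1)] A1[OF h(2)] by auto
    show "m = m'"
    proof (rule ccontr)
      assume "m \<noteq> m'"
      then consider "m < m'" | "m' < m" by linarith
      then show False
      proof cases
        case 1
        from c(2) have "\<forall>k<m'. (k,n)\<notin>A" unfolding fc_cond_def by blast
        with 1 h(1) show False by blast
      next
        case 2
        from c(1) have "\<forall>k<m. (k,n)\<notin>A" unfolding fc_cond_def by blast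
        with 2 h(2) show False by blast
      qed
    qed
  qed
  have C: "is_complete_matching E a b A" unfolding is_complete_matching_def
  proof (intro conjI M allI impI)
    fix m n assume h: "m < length a" "n < length b" "E (a!m) (b!n)"
    show "(\<exists>n'. (m,n')\<in>A) \<or> (\<exists>m'. (m',n)\<in>A)"
    proof (rule ccontr)
      assume nt: "\<not> ?thesis"
      hence "fc_cond E a b A m n" using h unfolding fc_cond_def by blast
      hence "(m,n)\<in>A" by (rule A2)
      thus False using nt by blast
    qed
  qed
  have F: "\<forall>(m,n)\<in>A. (\<forall>l<n. E (a!m) (b!l) \<longrightarrow> (\<exists>k<m. (k,l)\<in>A)) \<and>
         (\<forall>k<m. E (a!k) (b!n) \<longrightarrow> (\<exists>l<n. (k,l)\<in>A))"
  proof (intro ballI, clarify, intro conjI allI impI)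
    fix m n l assume mn: "(m,n)\<in>A" and l: "l<n" "E (a!m) (b!l)"
    have c: "fc_cond E a b A m n" using A1 mn by blast
    hence "(m,l)\<notin>A" using l unfolding fc_cond_def by blast
    hence nc: "\<not> fc_cond E a b A m l" using A2 by blast
    have c1: "m < length a" "n < length b" "\<forall>l'<n. (m,l')\<notin>A" using c unfolding fc_cond_def by blast+
    have "l < length b" using c1 l by linarith
    moreover have "\<forall>l'<l. (m,l')\<notin>A" using c1 l by auto
    ultimately show "\<exists>k<m. (k,l)\<in>A" using nc c1 l unfolding fc_cond_def by blast
  next
    fix m n k assume mn: "(m,n)\<in>A" and k: "k<m" "E (a!k) (b!n)"
    have c: "fc_cond E a b A m n" using A1 mn by blast
    hence "(k,n)\<notin>A" using k unfolding fc_cond_def by blast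
    hence nc: "\<not> fc_cond E a b A k n" using A2 by blast
    have c1: "m < length a" "n < length b" "\<forall>k'<m. (k',n)\<notin>A" using c unfolding fc_cond_def by blast+
    have "k < length a" using c1 k by linarith
    moreover have "\<forall>k'<k. (k',n)\<notin>A" using c1 k by auto
    ultimately show "\<exists>l<n. (k,l)\<in>A" using nc c1 k unfolding fc_cond_def by blast
  qed
  show ?thesis unfolding is_fcfs_matching_def using C F by blast
qed

lemma char_unique:
  assumes "char_prop E a b A" "char_prop E a b B" shows "A = B"
proof -
  have "\<forall>m n. m + n = d \<longrightarrow> ((m,n)\<in>A \<longleftrightarrow> (m,n)\<in>B)" for d
  proof (induction d rule: less_induct)
    case (less d)
    show ?case
    proof (intro allI impI)
      fix m n assume d: "m + n = d"
      have h1: "(m,l)\<in>A \<longleftrightarrow> (m,l)\<in>B" if "l<n" for l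
      proof -
        have "m+l<d" using that d by simp
        thus ?thesis using less.IH by blast
      qed
      have h2: "(k,n)\<in>A \<longleftrightarrow> (k,n)\<in>B" if "k<m" for k
      proof -
        have "k+n<d" using that d by simp
        thus ?thesis using less.IH by blast
      qed
      have "(\<forall>l<n. (m,l)\<notin>A) = (\<forall>l<n. (m,l)\<notin>B)"
        using h1 by auto
      moreover have "(\<forall>k<m. (k,n)\<notin>A) = (\<forall>k<m. (k,n)\<notin>B)"
        using h2 by auto
      ultimately have "fc_cond E a b A m n = fc_cond E a b B m n"
        unfolding fc_cond_def by simp
      thus "(m,n)\<in>A \<longleftrightarrow> (m,n)\<in>B" using assms unfolding char_prop_def by auto
    qed
  qed
  thus ?thesis by auto
qed

lemma char_exists_aux:
  "\<exists>A. (\<forall>(m,n)\<in>A. m+n<d) \<and> (\<forall>m n. m+n<d \<longrightarrow> ((m,n)\<in>A \<longleftrightarrow> fc_cond E a b A m n))"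
proof (induction d)
  case 0
  show ?case by (rule exI[of _ "{}"]) auto
next
  case (Suc d)
  then obtain A where A1: "\<forall>(m,n)\<in>A. m+n<d" and A2: "\<forall>m n. m+n<d \<longrightarrow> ((m,n)\<in>A \<longleftrightarrow> fc_cond E a b A m n)"
    by auto
  define A' where "A' = A \<union> {(m,n). m+n = d \<and> fc_cond E a b A m n}"
  have agree: "\<And>m n. m + n < d \<Longrightarrow> (m,n)\<in>A' \<longleftrightarrow> (m,n)\<in>A" unfolding A'_def by auto
  have condeq: "\<And>m n. m + n \<le> d \<Longrightarrow> fc_cond E a b A' m n = fc_cond E a b A m n"
  proof -
    fix m n assume mn: "m + n \<le> d"
    have "(\<forall>l<n. (m,l)\<notin>A') = (\<forall>l<n. (m,l)\<notin>A)" using agree mn by auto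
    moreover have "(\<forall>k<m. (k,n)\<notin>A') = (\<forall>k<m. (k,n)\<notin>A)" using agree mn by auto
    ultimately show "fc_cond E a b A' m n = fc_cond E a b A m n" unfolding fc_cond_def by simp
  qed
  show ?case
  proof (rule exI[of _ A'], intro conjI allI impI)
    show "\<forall>(m,n)\<in>A'. m+n<Suc d" using A1 unfolding A'_def by auto
  next
    fix m n assume "m + n < Suc d"
    then consider "m + n < d" | "m + n = d" by linarith
    then show "(m,n)\<in>A' \<longleftrightarrow> fc_cond E a b A' m n"
    proof cases
      case 1
      have "(m,n)\<in>A' \<longleftrightarrow> (m,n)\<in>A" by (rule agree[OF 1])
      also have "\<dots> \<longleftrightarrow> fc_cond E a b A m n" by (rule A2[rule_format, OF 1])
      also have "\<dots> \<longleftrightarrow> fc_cond E a b A' m n" using 1 by (intro condeq[symmetric]) simp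
      finally show ?thesis .
    next
      case 2
      have "(m,n)\<notin>A" using A1 2 by auto
      hence "(m,n)\<in>A' \<longleftrightarrow> fc_cond E a b A m n" using 2 unfolding A'_def by blast
      also have "\<dots> \<longleftrightarrow> fc_cond E a b A' m n" using 2 by (intro condeq[symmetric]) simp
      finally show ?thesis .
    qed
  qed
qed

lemma char_exists: "\<exists>A. char_prop E a b A"
proof -
  obtain A where A1: "\<forall>(m,n)\<in>A. m+n<length a + length b"
    and A2: "\<forall>m n. m+n<length a + length b \<longrightarrow> ((m,n)\<in>A \<longleftrightarrow> fc_cond E a b A m n)"
    using char_exists_aux[where d="length a + length b" and E=E and a=a and b=b] by (elim exE conjE)
  have "(m,n)\<in>A \<longleftrightarrow> fc_cond E a b A m n" for m n
  proof (cases "m+n<length a + length b")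
    case False
    hence "(m,n)\<notin>A" using A1 by auto
    moreover have "\<not> fc_cond E a b A m n" using False unfolding fc_cond_def by auto
    ultimately show ?thesis by auto
  next
    case True
    show ?thesis by (rule A2[rule_format, OF True])
  qed
  hence "char_prop E a b A" unfolding char_prop_def by (intro allI)
  thus ?thesis by (rule exI)
qed

lemma fcfs_ex1: "\<exists>!A. is_fcfs_matching E a b A"
proof -
  obtain A where A: "char_prop E a b A" using char_exists by blast
  show ?thesis
  proof (rule ex1I)
    show "is_fcfs_matching E a b A" using A by (rule char_imp_fcfs)
  next
    fix B assume "is_fcfs_matching E a b B"
    hence "char_prop E a b B" by (rule fcfs_imp_char)
    thus "B = A" using A by (rule char_unique)
  qed
qed

lemma fcfs_matching_is: "is_fcfs_matching E a b (fcfs_matching E a b)"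
  unfolding fcfs_matching_def using fcfs_ex1 by (rule theI')

lemma fcfs_matching_eq: "is_fcfs_matching E a b A \<Longrightarrow> fcfs_matching E a b = A"
  unfolding fcfs_matching_def using fcfs_ex1 by (rule the1_equality)

lemma reversal:
  assumes F: "is_fcfs_matching E a b A" and P: "perfect_matching a b A"
    and la: "length a = M" and lb: "length b = M"
  shows "is_fcfs_matching E (rev (exch_a a A M)) (rev (exch_b b A M))
           {(i,j). i<M \<and> j<M \<and> (M-1-j, M-1-i)\<in>A}"
    and "perfect_matching (rev (exch_a a A M)) (rev (exch_b b A M))
           {(i,j). i<M \<and> j<M \<and> (M-1-j, M-1-i)\<in>A}"
    and "\<exists>h. bij_betw h {..<M} {..<M} \<and> (\<forall>i<M. rev (exch_a a A M) ! i = a ! h i)"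
    and "\<exists>h. bij_betw h {..<M} {..<M} \<and> (\<forall>i<M. rev (exch_b b A M) ! i = b ! h i)"
proof -
  define x where "x = rev (exch_a a A M)"
  define y where "y = rev (exch_b b A M)"
  define R where "R = {(i,j). i<M \<and> j<M \<and> (M-1-j, M-1-i)\<in>A}"
  have Mt: "is_matching E a b A" using F unfolding is_fcfs_matching_def is_complete_matching_def by auto
  have inA: "\<And>m n. (m,n)\<in>A \<Longrightarrow> m < M \<and> n < M \<and> E (a!m) (b!n)" using Mt la lb unfolding is_matching_def by auto
  have u1: "\<And>m n n'. (m,n)\<in>A \<Longrightarrow> (m,n')\<in>A \<Longrightarrow> n = n'" using Mt unfolding is_matching_def by auto
  have u2: "\<And>m m' n. (m,n)\<in>A \<Longrightarrow> (m',n)\<in>A \<Longrightarrow> m = m'" using Mt unfolding is_matching_def by auto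
  have FF: "\<forall>(m,n)\<in>A. (\<forall>l<n. E (a!m) (b!l) \<longrightarrow> (\<exists>k<m. (k,l)\<in>A)) \<and>
         (\<forall>k<m. E (a!k) (b!n) \<longrightarrow> (\<exists>l<n. (k,l)\<in>A))" using F unfolding is_fcfs_matching_def by auto
  define \<sigma> where "\<sigma> m = (THE n. (m,n)\<in>A)" for m
  define \<tau> where "\<tau> n = (THE m. (m,n)\<in>A)" for n
  have sig: "\<sigma> m = n" if h: "(m,n)\<in>A" for m n unfolding \<sigma>_def
  proof (rule the_equality)
    show "(m,n)\<in>A" by (rule h)
  next
    fix n' assume "(m,n')\<in>A" thus "n' = n" using u1[OF h] by simp
  qed
  have tau: "\<tau> n = m" if h: "(m,n)\<in>A" for m n unfolding \<tau>_def
  proof (rule the_equality)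
    show "(m,n)\<in>A" by (rule h)
  next
    fix m' assume "(m',n)\<in>A" thus "m' = m" using u2[OF h] by simp
  qed
  have sigA: "(m, \<sigma> m)\<in>A" if mM: "m < M" for m
  proof -
    obtain n where "(m,n)\<in>A" using P la mM unfolding perfect_matching_def by blast
    thus ?thesis using sig by simp
  qed
  have tauA: "(\<tau> n, n)\<in>A" if nM: "n < M" for n
  proof -
    obtain m where "(m,n)\<in>A" using P lb nM unfolding perfect_matching_def by blast
    thus ?thesis using tau by simp
  qed
  have lx: "length x = M" and ly: "length y = M" unfolding x_def y_def exch_a_def exch_b_def by auto
  have xi: "\<And>i. i < M \<Longrightarrow> x!i = a!(\<tau> (M-1-i))"
    unfolding x_def exch_a_def \<tau>_def by (simp add: rev_nth)
  have yj: "\<And>j. j < M \<Longrightarrow> y!j = b!(\<sigma> (M-1-j))"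
    unfolding y_def exch_b_def \<sigma>_def by (simp add: rev_nth)
  have KA1: "\<And>m n m' n'. (m,n)\<in>A \<Longrightarrow> (m',n')\<in>A \<Longrightarrow> m<m' \<Longrightarrow> E (a!m) (b!n') \<Longrightarrow> n<n'"
  proof (rule ccontr)
    fix m n m' n' assume h: "(m,n)\<in>A" "(m',n')\<in>A" "m<m'" "E (a!m) (b!n')" "\<not> n<n'"
    have "n \<noteq> n'"
    proof
      assume "n = n'" then have "m = m'" using u2 h(1,2) by blast
      then show False using h(3) by simp
    qed
    hence nn: "n' < n" using h by auto
    from FF h(1) have "\<forall>l<n. E (a!m) (b!l) \<longrightarrow> (\<exists>k<m. (k,l)\<in>A)" by auto
    then obtain k where "k<m" "(k,n')\<in>A" using nn h(4) by blast
    moreover have "k = m'" using u2 calculation(2) h(2) by blast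
    ultimately show False using h(3) by linarith
  qed
  have KA2: "\<And>m n m' n'. (m,n)\<in>A \<Longrightarrow> (m',n')\<in>A \<Longrightarrow> n<n' \<Longrightarrow> E (a!m') (b!n) \<Longrightarrow> m<m'"
  proof (rule ccontr)
    fix m n m' n' assume h: "(m,n)\<in>A" "(m',n')\<in>A" "n<n'" "E (a!m') (b!n)" "\<not> m<m'"
    have "m \<noteq> m'"
    proof
      assume "m = m'" then have "n = n'" using u1 h(1,2) by blast
      then show False using h(3) by simp
    qed
    hence mm: "m' < m" using h by auto
    from FF h(1) have "\<forall>k<m. E (a!k) (b!n) \<longrightarrow> (\<exists>l<n. (k,l)\<in>A)" by auto
    then obtain l where "l<n" "(m',l)\<in>A" using mm h(4) by blast
    moreover have "l = n'" using u1 calculation(2) h(2) by blast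
    ultimately show False using h(3) by linarith
  qed
  have Rx: "\<And>i j. (i,j)\<in>R \<Longrightarrow> x!i = a!(M-1-j) \<and> y!j = b!(M-1-i)"
  proof -
    fix i j assume "(i,j)\<in>R"
    hence h: "i<M" "j<M" "(M-1-j, M-1-i)\<in>A" unfolding R_def by auto
    have "x!i = a!(M-1-j)" using xi[OF h(1)] tau[OF h(3)] by simp
    moreover have "y!j = b!(M-1-i)" using yj[OF h(2)] sig[OF h(3)] by simp
    ultimately show "x!i = a!(M-1-j) \<and> y!j = b!(M-1-i)" by blast
  qed
  have RM: "is_matching E x y R" unfolding is_matching_def
  proof (intro conjI allI impI ballI)
    fix p assume p: "p\<in>R" then show "case p of (m,n) \<Rightarrow> m < length x \<and> n < length y \<and> E (x!m) (y!n)"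
      using Rx[of "fst p" "snd p"] inA lx ly unfolding R_def by (cases p) auto
  next
    fix m n n' assume h: "(m,n)\<in>R" "(m,n')\<in>R"
    hence "M-1-n = M-1-n'" "n<M" "n'<M" unfolding R_def using u2 by auto
    then show "n = n'" by linarith
  next
    fix m m' n assume h: "(m,n)\<in>R" "(m',n)\<in>R"
    hence "M-1-m = M-1-m'" "m<M" "m'<M" unfolding R_def using u1 by auto
    then show "m = m'" by linarith
  qed
  have Rperf: "perfect_matching x y R" unfolding perfect_matching_def
  proof (intro conjI allI impI)
    fix i assume i: "i < length x"
    hence "(\<tau> (M-1-i), M-1-i)\<in>A" using tauA lx by auto
    moreover have "\<tau> (M-1-i) < M" using calculation inA by auto
    ultimately have "(i, M-1-\<tau> (M-1-i))\<in>R" unfolding R_def using i lx by auto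
    thus "\<exists>n. (i,n)\<in>R" by blast
  next
    fix j assume j: "j < length y"
    hence "(M-1-j, \<sigma> (M-1-j))\<in>A" using sigA ly by auto
    moreover have "\<sigma> (M-1-j) < M" using calculation inA by auto
    ultimately have "(M-1-\<sigma> (M-1-j), j)\<in>R" unfolding R_def using j ly by auto
    thus "\<exists>m. (m,j)\<in>R" by blast
  qed
  have RC: "is_complete_matching E x y R" unfolding is_complete_matching_def
    using RM Rperf unfolding perfect_matching_def by blast
  have RF: "\<forall>(i,j)\<in>R. (\<forall>l<j. E (x!i) (y!l) \<longrightarrow> (\<exists>k<i. (k,l)\<in>R)) \<and>
         (\<forall>k<i. E (x!k) (y!j) \<longrightarrow> (\<exists>l<j. (k,l)\<in>R))"
  proof (intro ballI, clarify, intro conjI allI impI)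
    fix i j l assume ij: "(i,j)\<in>R" and l: "l<j" "E (x!i) (y!l)"
    define m where "m = M-1-j"
    define n where "n = M-1-i"
    have mn: "(m,n)\<in>A" and iM: "i<M" and jM: "j<M" using ij unfolding R_def m_def n_def by auto
    define m' where "m' = M-1-l"
    have mm': "m < m'" using l jM unfolding m_def m'_def by auto
    have A': "(m', \<sigma> m')\<in>A" using sigA l jM unfolding m'_def by auto
    have "E (a!m) (b!\<sigma> m')" using l Rx[OF ij] yj[of l] jM unfolding m_def m'_def by auto
    hence nn: "n < \<sigma> m'" using KA1[OF mn A' mm'] by auto
    have sM: "\<sigma> m' < M" using A' inA by auto
    have "(M-1-\<sigma> m', l)\<in>R" unfolding R_def using A' sM l jM unfolding m'_def by auto
    moreover have "M-1-\<sigma> m' < i" using nn sM iM unfolding n_def by auto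
    ultimately show "\<exists>k<i. (k,l)\<in>R" by blast
  next
    fix i j k assume ij: "(i,j)\<in>R" and k: "k<i" "E (x!k) (y!j)"
    define m where "m = M-1-j"
    define n where "n = M-1-i"
    have mn: "(m,n)\<in>A" and iM: "i<M" and jM: "j<M" using ij unfolding R_def m_def n_def by auto
    define n' where "n' = M-1-k"
    have nn': "n < n'" using k iM unfolding n_def n'_def by auto
    have A': "(\<tau> n', n')\<in>A" using tauA k iM unfolding n'_def by auto
    have "E (a!\<tau> n') (b!n)" using k Rx[OF ij] xi[of k] iM unfolding n_def n'_def by auto
    hence mm: "m < \<tau> n'" using KA2[OF mn A' nn'] by auto
    have tM: "\<tau> n' < M" using A' inA by auto
    have "(k, M-1-\<tau> n')\<in>R" unfolding R_def using A' tM k iM unfolding n'_def by auto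
    moreover have "M-1-\<tau> n' < j" using mm tM jM unfolding m_def by auto
    ultimately show "\<exists>l<j. (k,l)\<in>R" by blast
  qed
  show "is_fcfs_matching E (rev (exch_a a A M)) (rev (exch_b b A M))
           {(i,j). i<M \<and> j<M \<and> (M-1-j, M-1-i)\<in>A}"
    using RC RF unfolding is_fcfs_matching_def x_def[symmetric] y_def[symmetric] R_def[symmetric] by auto
  show "perfect_matching (rev (exch_a a A M)) (rev (exch_b b A M))
           {(i,j). i<M \<and> j<M \<and> (M-1-j, M-1-i)\<in>A}"
    using Rperf unfolding x_def[symmetric] y_def[symmetric] R_def[symmetric] .
  show "\<exists>h. bij_betw h {..<M} {..<M} \<and> (\<forall>i<M. rev (exch_a a A M) ! i = a ! h i)"
  proof (intro exI conjI allI impI)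
    show "rev (exch_a a A M) ! i = a ! \<tau> (M-1-i)" if "i<M" for i using xi[OF that] unfolding x_def .
    have inj: "inj_on (\<lambda>i. \<tau> (M-1-i)) {..<M}"
    proof (rule inj_onI)
      fix i i' assume h: "i \<in> {..<M}" "i' \<in> {..<M}" "\<tau> (M-1-i) = \<tau> (M-1-i')"
      have "(\<tau> (M-1-i), M-1-i)\<in>A" "(\<tau> (M-1-i'), M-1-i')\<in>A" using tauA[of "M-1-i"] tauA[of "M-1-i'"] h(1,2) by auto
      hence "M-1-i = M-1-i'" using u1 h(3) by metis
      thus "i = i'" using h by auto
    qed
    have sub: "(\<lambda>i. \<tau> (M-1-i)) ` {..<M} \<subseteq> {..<M}"
    proof
      fix z assume "z \<in> (\<lambda>i. \<tau> (M-1-i)) ` {..<M}"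
      then obtain i where "i<M" "z = \<tau> (M-1-i)" by auto
      thus "z \<in> {..<M}" using inA[OF tauA[of "M-1-i"]] by auto
    qed
    show "bij_betw (\<lambda>i. \<tau> (M-1-i)) {..<M} {..<M}"
      unfolding bij_betw_def using inj endo_inj_surj[OF _ sub inj] by simp
  qed
  show "\<exists>h. bij_betw h {..<M} {..<M} \<and> (\<forall>i<M. rev (exch_b b A M) ! i = b ! h i)"
  proof (intro exI conjI allI impI)
    show "rev (exch_b b A M) ! i = b ! \<sigma> (M-1-i)" if "i<M" for i using yj[OF that] unfolding y_def .
    have inj: "inj_on (\<lambda>i. \<sigma> (M-1-i)) {..<M}"
    proof (rule inj_onI)
      fix i i' assume h: "i \<in> {..<M}" "i' \<in> {..<M}" "\<sigma> (M-1-i) = \<sigma> (M-1-i')"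
      have "(M-1-i, \<sigma> (M-1-i))\<in>A" "(M-1-i', \<sigma> (M-1-i'))\<in>A" using sigA[of "M-1-i"] sigA[of "M-1-i'"] h(1,2) by auto
      hence "M-1-i = M-1-i'" using u2 h(3) by metis
      thus "i = i'" using h by auto
    qed
    have sub: "(\<lambda>i. \<sigma> (M-1-i)) ` {..<M} \<subseteq> {..<M}"
    proof
      fix z assume "z \<in> (\<lambda>i. \<sigma> (M-1-i)) ` {..<M}"
      then obtain i where "i<M" "z = \<sigma> (M-1-i)" by auto
      thus "z \<in> {..<M}" using inA[OF sigA[of "M-1-i"]] by auto
    qed
    show "bij_betw (\<lambda>i. \<sigma> (M-1-i)) {..<M} {..<M}"
      unfolding bij_betw_def using inj endo_inj_surj[OF _ sub inj] by simp
  qed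
qed



lemma block_prob:
  fixes c :: "int \<Rightarrow> 'w \<Rightarrow> 'c" and s :: "int \<Rightarrow> 'w \<Rightarrow> 's"
  assumes ps: "prob_space P"
    and indep: "prob_space.indep_vars P (\<lambda>_. count_space UNIV)
                  (\<lambda>i. case i of Inl k \<Rightarrow> (\<lambda>\<omega>. Inl (c k \<omega>) :: 'c + 's)
                                | Inr k \<Rightarrow> (\<lambda>\<omega>. Inr (s k \<omega>))) (UNIV :: (int + int) set)"
    and law_c: "\<And>k x. measure P {\<omega> \<in> space P. c k \<omega> = x} = \<alpha> x"
    and law_s: "\<And>k y. measure P {\<omega> \<in> space P. s k \<omega> = y} = \<beta> y"
    and lx: "length x = M" and ly: "length y = M"
  shows "measure P {\<omega> \<in> space P. block_eq c s m M x y \<omega>} = (\<Prod>i<M. \<alpha> (x!i)) * (\<Prod>i<M. \<beta> (y!i))"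
proof -
  interpret prob_space P by (rule ps)
  define X where "X = (\<lambda>i. case i of Inl k \<Rightarrow> (\<lambda>\<omega>. Inl (c k \<omega>) :: 'c + 's)
                                | Inr k \<Rightarrow> (\<lambda>\<omega>. Inr (s k \<omega>)))"
  define f where "f = (\<lambda>i::int+int. case i of Inl k \<Rightarrow> (Inl (x ! nat (k - m - 1)) :: 'c+'s)
                                | Inr k \<Rightarrow> Inr (y ! nat (k - m - 1)))"
  define Ev where "Ev j = X j -` {f j} \<inter> space P" for j
  define J1 where "J1 = (\<lambda>i. Inl (m+1+int i) :: int+int) ` {..<M}"
  define J2 where "J2 = (\<lambda>i. Inr (m+1+int i) :: int+int) ` {..<M}"
  have beq: "block_eq c s m M x y \<omega> \<longleftrightarrow> (\<forall>i<M. c (m+1+int i) \<omega> = x!i) \<and> (\<forall>i<M. s (m+1+int i) \<omega> = y!i)" for \<omega>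
    unfolding block_eq_def by (auto simp: list_eq_iff_nth_eq lx ly)
  show ?thesis
  proof (cases "M = 0")
    case True
    have "{\<omega> \<in> space P. block_eq c s m M x y \<omega>} = space P" using True beq by auto
    thus ?thesis using True prob_space by simp
  next
    case False
    have iv: "indep_vars (\<lambda>_. count_space UNIV) X UNIV" using indep unfolding X_def .
    hence isets: "indep_sets (\<lambda>i. {X i -` A \<inter> space P | A. A \<in> sets (count_space UNIV)}) UNIV"
      unfolding indep_vars_def2 by blast
    have ne: "J1 \<union> J2 \<noteq> {}" using False unfolding J1_def by auto
    have prodJ: "prob (\<Inter>j\<in>J1 \<union> J2. Ev j) = (\<Prod>j\<in>J1 \<union> J2. prob (Ev j))"
      by (rule indep_setsD[OF isets]) (use ne in \<open>auto simp: J1_def J2_def Ev_def\<close>)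
    have eq: "{\<omega>\<in>space P. block_eq c s m M x y \<omega>} = (\<Inter>j\<in>J1 \<union> J2. Ev j)"
    proof -
      have "(\<Inter>j\<in>J1 \<union> J2. Ev j) = {\<omega>\<in>space P. (\<forall>i<M. c (m+1+int i) \<omega> = x!i) \<and> (\<forall>i<M. s (m+1+int i) \<omega> = y!i)}"
      proof (intro equalityI subsetI)
        fix \<omega> assume h: "\<omega> \<in> (\<Inter>j\<in>J1 \<union> J2. Ev j)"
        obtain j0 where j0: "j0 \<in> J1 \<union> J2" using ne by blast
        have "\<omega> \<in> Ev j0" using h j0 by blast
        hence sp: "\<omega> \<in> space P" unfolding Ev_def by blast
        have hc: "c (m+1+int i) \<omega> = x!i" if "i<M" for i
        proof -
          have "\<omega> \<in> Ev (Inl (m+1+int i))" using h that unfolding J1_def by auto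
          thus ?thesis by (simp add: Ev_def X_def f_def)
        qed
        have hs: "s (m+1+int i) \<omega> = y!i" if "i<M" for i
        proof -
          have "\<omega> \<in> Ev (Inr (m+1+int i))" using h that unfolding J2_def by auto
          thus ?thesis by (simp add: Ev_def X_def f_def)
        qed
        show "\<omega> \<in> {\<omega>\<in>space P. (\<forall>i<M. c (m+1+int i) \<omega> = x!i) \<and> (\<forall>i<M. s (m+1+int i) \<omega> = y!i)}"
          using sp hc hs by blast
      next
        fix \<omega> assume "\<omega> \<in> {\<omega>\<in>space P. (\<forall>i<M. c (m+1+int i) \<omega> = x!i) \<and> (\<forall>i<M. s (m+1+int i) \<omega> = y!i)}"
        thus "\<omega> \<in> (\<Inter>j\<in>J1 \<union> J2. Ev j)" by (auto simp: J1_def J2_def Ev_def X_def f_def)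
      qed
      thus ?thesis using beq by auto
    qed
    have p1: "prob (Ev (Inl (m+1+int i))) = \<alpha> (x!i)" for i
    proof -
      have "Ev (Inl (m+1+int i)) = {\<omega> \<in> space P. c (m+1+int i) \<omega> = x!i}"
        by (auto simp: Ev_def X_def f_def)
      thus ?thesis using law_c by simp
    qed
    have p2: "prob (Ev (Inr (m+1+int i))) = \<beta> (y!i)" for i
    proof -
      have "Ev (Inr (m+1+int i)) = {\<omega> \<in> space P. s (m+1+int i) \<omega> = y!i}"
        by (auto simp: Ev_def X_def f_def)
      thus ?thesis using law_s by simp
    qed
    have "(\<Prod>j\<in>J1 \<union> J2. prob (Ev j)) = (\<Prod>j\<in>J1. prob (Ev j)) * (\<Prod>j\<in>J2. prob (Ev j))"
      by (rule prod.union_disjoint) (auto simp: J1_def J2_def)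
    also have "(\<Prod>j\<in>J1. prob (Ev j)) = (\<Prod>i<M. \<alpha> (x!i))"
      unfolding J1_def by (subst prod.reindex) (auto simp: inj_on_def p1)
    also have "(\<Prod>j\<in>J2. prob (Ev j)) = (\<Prod>i<M. \<beta> (y!i))"
      unfolding J2_def by (subst prod.reindex) (auto simp: inj_on_def p2)
    finally show ?thesis using eq prodJ by simp
  qed
qed


theorem corollary4p1:
  fixes E :: "'c::finite \<Rightarrow> 's::finite \<Rightarrow> bool"
    and P :: "'w measure"
    and c :: "int \<Rightarrow> 'w \<Rightarrow> 'c" and s :: "int \<Rightarrow> 'w \<Rightarrow> 's"
    and \<alpha> :: "'c \<Rightarrow> real" and \<beta> :: "'s \<Rightarrow> real"
    and a :: "'c list" and b :: "'s list" and M :: nat and m :: int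
  assumes conn: "bip_connected E"
    and ps: "prob_space P"
    and indep: "prob_space.indep_vars P (\<lambda>_. count_space UNIV)
                  (\<lambda>i. case i of Inl k \<Rightarrow> (\<lambda>\<omega>. Inl (c k \<omega>) :: 'c + 's)
                                | Inr k \<Rightarrow> (\<lambda>\<omega>. Inr (s k \<omega>))) (UNIV :: (int + int) set)"
    and law_c: "\<And>k x. measure P {\<omega> \<in> space P. c k \<omega> = x} = \<alpha> x"
    and law_s: "\<And>k y. measure P {\<omega> \<in> space P. s k \<omega> = y} = \<beta> y"
    and pos_a: "\<And>x. \<alpha> x > 0" and pos_b: "\<And>y. \<beta> y > 0"
    and len_a: "length a = M" and len_b: "length b = M"
    and perf: "fcfs_perfect E a b"
  shows "fcfs_perfect E (rev (exch_a a (fcfs_matching E a b) M)) (rev (exch_b b (fcfs_matching E a b) M))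
    \<and> measure P {\<omega> \<in> space P. block_eq c s m M (rev (exch_a a (fcfs_matching E a b) M))
                                               (rev (exch_b b (fcfs_matching E a b) M)) \<omega>
                                 \<and> block_perfect E c s m M \<omega>}
        / measure P {\<omega> \<in> space P. block_perfect E c s m M \<omega>}
      = measure P {\<omega> \<in> space P. block_eq c s m M a b \<omega> \<and> block_perfect E c s m M \<omega>}
        / measure P {\<omega> \<in> space P. block_perfect E c s m M \<omega>}"
  proof -
  interpret prob_space P by (rule ps)
  define A where "A = fcfs_matching E a b"
  have FA: "is_fcfs_matching E a b A" unfolding A_def by (rule fcfs_matching_is)
  have PA: "perfect_matching a b A" using perf unfolding fcfs_perfect_def A_def .
  define x where "x = rev (exch_a a A M)"
  define y where "y = rev (exch_b b A M)"
  note rv = reversal[OF FA PA len_a len_b]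
  have pxy: "fcfs_perfect E x y"
    unfolding fcfs_perfect_def x_def y_def fcfs_matching_eq[OF rv(1)] by (rule rv(2))
  have lx: "length x = M" and ly: "length y = M" by (simp_all add: x_def y_def exch_a_def exch_b_def)
  have evsimp: "{\<omega>\<in>space P. block_eq c s m M x' y' \<omega> \<and> block_perfect E c s m M \<omega>}
      = {\<omega>\<in>space P. block_eq c s m M x' y' \<omega>}" if "fcfs_perfect E x' y'" for x' y'
    using that unfolding block_eq_def block_perfect_def by auto
  have bpx: "measure P {\<omega> \<in> space P. block_eq c s m M x y \<omega>} = (\<Prod>i<M. \<alpha> (x!i)) * (\<Prod>i<M. \<beta> (y!i))"
    by (rule block_prob[OF ps indep law_c law_s lx ly])
  have bpa: "measure P {\<omega> \<in> space P. block_eq c s m M a b \<omega>} = (\<Prod>i<M. \<alpha> (a!i)) * (\<Prod>i<M. \<beta> (b!i))"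
    by (rule block_prob[OF ps indep law_c law_s len_a len_b])
  obtain h1 where h1: "bij_betw h1 {..<M} {..<M}" "\<forall>i<M. x ! i = a ! h1 i"
    using rv(3) unfolding x_def by blast
  obtain h2 where h2: "bij_betw h2 {..<M} {..<M}" "\<forall>i<M. y ! i = b ! h2 i"
    using rv(4) unfolding y_def by blast
  have "(\<Prod>i<M. \<alpha> (x!i)) = (\<Prod>i<M. \<alpha> (a!(h1 i)))" using h1(2) by (intro prod.cong) auto
  also have "\<dots> = (\<Prod>i<M. \<alpha> (a!i))" by (rule prod.reindex_bij_betw[OF h1(1)])
  finally have e1: "(\<Prod>i<M. \<alpha> (x!i)) = (\<Prod>i<M. \<alpha> (a!i))" .
  have "(\<Prod>i<M. \<beta> (y!i)) = (\<Prod>i<M. \<beta> (b!(h2 i)))" using h2(2) by (intro prod.cong) auto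
  also have "\<dots> = (\<Prod>i<M. \<beta> (b!i))" by (rule prod.reindex_bij_betw[OF h2(1)])
  finally have e2: "(\<Prod>i<M. \<beta> (y!i)) = (\<Prod>i<M. \<beta> (b!i))" .
  have num: "measure P {\<omega>\<in>space P. block_eq c s m M x y \<omega> \<and> block_perfect E c s m M \<omega>}
      = measure P {\<omega>\<in>space P. block_eq c s m M a b \<omega> \<and> block_perfect E c s m M \<omega>}"
    unfolding evsimp[OF pxy] evsimp[OF perf] bpx bpa e1 e2 ..
  show ?thesis
    unfolding A_def[symmetric] x_def[symmetric] y_def[symmetric] using pxy num by simp
qed

end
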